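(* Let $f:X\to\mathcal G$ be convex and $x_0\in\operatorname{dom}f$. For $x\in X$, $t\in\mathbb R$ put $x_t=x_0+t(x-x_0)$ and $I(x)=\operatorname{cl}\operatorname{co}\bigcup_{t\in(0,1)}f(x_t)$. Then $x_0$ solves the scalarized Minty inequality (for all $x\in X$ with $f(x)\ne f(x_0)$ there exists $z^*\in C^-\setminus\{0\}$ with $\varphi_{f,z^*}(x)\neq-\infty$ and $\varphi'_{f,z^*}(x,x_0-x)<0$) if and only if for all $x\in\operatorname{dom} f$: $$f(x)\ne f(x_0)\ \Longrightarrow\ I(x)\supseteq f(x)\ \text{ and }\ I(x)\ne f(x).$$
   Context: $X$ real linear space, $Z$ real locally convex Hausdorff space with dual $Z^*$, $C\subseteq Z$ closed convex cone, $0\in C$, $C^-=\{z^*:z^*(c)\le0\ \forall c\in C\}$, $C^-\setminus\{0\}\neq\emptyset$. $\mathcal G=\{A\subseteq Z:A=\operatorname{cl}\operatorname{co}(A+C)\}$; $A\oplus B=\operatorname{cl}\{a+b\}$, $tA=\{ta\}$ ($t>0$). $f$ convex: $f(tx_1+(1-t)x_2)\supseteq tf(x_1)\oplus(1-t)f(x_2)$; $\operatorname{dom}f=\{x:f(x)\ne\emptyset\}$. On $\overline{\mathbb R}$: inf-addition $\dot+$ ($(-\infty)\dot+(+\infty)=+\infty$), $r\ominus s=\inf\{t\in\mathbb R:r\le s\dot+t\}$ ($\inf\emptyset=+\infty$). $\varphi_{f,z^*}(x)=\inf\{-z^*(z):z\in f(x)\}$ ($+\infty$ if $f(x)=\emptyset$),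 $\varphi'_{f,z^*}(x,u)=\inf_{t>0}\frac1t(\varphi_{f,z^*}(x+tu)\ominus\varphi_{f,z^*}(x))$. *)

theory Defs
  imports "HOL-Analysis.Analysis"
begin

definition lc_tvs :: "'z::real_vector topology \<Rightarrow> bool" where
  "lc_tvs T \<longleftrightarrow> topspace T = UNIV \<and> Hausdorff_space T
     \<and> continuous_map (prod_topology T T) T (\<lambda>(x, y). x + y)
     \<and> continuous_map (prod_topology euclideanreal T) T (\<lambda>(a, x). a *\<^sub>R x)
     \<and> (\<forall>U. openin T U \<and> 0 \<in> U \<longrightarrow> (\<exists>V. openin T V \<and> convex V \<and> 0 \<in> V \<and> V \<subseteq> U))"

definition topdual :: "'z::real_vector topology \<Rightarrow> ('z \<Rightarrow> real) set" where
  "topdual T = {g. linear g \<and> continuous_map T euclideanreal g}"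

definition neg_dual_cone :: "'z::real_vector topology \<Rightarrow> 'z set \<Rightarrow> ('z \<Rightarrow> real) set" where
  "neg_dual_cone T C = {g \<in> topdual T. \<forall>c\<in>C. g c \<le> 0}"

text \<open>The space G of closed convex C-upper sets.\<close>
definition Gspace :: "'z::real_vector topology \<Rightarrow> 'z set \<Rightarrow> 'z set set" where
  "Gspace T C = {A. A = T closure_of (convex hull {a + c | a c. a \<in> A \<and> c \<in> C})}"

definition oplus_cl :: "'z::real_vector topology \<Rightarrow> 'z set \<Rightarrow> 'z set \<Rightarrow> 'z set" where
  "oplus_cl T A B = T closure_of {a + b | a b. a \<in> A \<and> b \<in> B}"

definition set_scale :: "real \<Rightarrow> 'z::real_vector set \<Rightarrow> 'z set" where
  "set_scale t A = (\<lambda>a. t *\<^sub>R a) ` A"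

definition set_convex_fun :: "'z::real_vector topology \<Rightarrow> ('x::real_vector \<Rightarrow> 'z set) \<Rightarrow> bool" where
  "set_convex_fun T f \<longleftrightarrow> (\<forall>x1 x2 t. 0 < t \<and> t < 1 \<longrightarrow>
      oplus_cl T (set_scale t (f x1)) (set_scale (1 - t) (f x2)) \<subseteq> f (t *\<^sub>R x1 + (1 - t) *\<^sub>R x2))"

definition sdom :: "('x \<Rightarrow> 'z set) \<Rightarrow> 'x set" where
  "sdom f = {x. f x \<noteq> {}}"

text \<open>Inf-addition on the extended reals: (-\<infinity>) + (+\<infinity>) = +\<infinity>.\<close>
definition inf_plus :: "ereal \<Rightarrow> ereal \<Rightarrow> ereal" where
  "inf_plus r s = (if r = \<infinity> \<or> s = \<infinity> then \<infinity> else r + s)"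

definition inf_minus :: "ereal \<Rightarrow> ereal \<Rightarrow> ereal" where
  "inf_minus r s = Inf {ereal t | t. r \<le> inf_plus s (ereal t)}"

definition scal_phi :: "('x \<Rightarrow> 'z set) \<Rightarrow> ('z \<Rightarrow> real) \<Rightarrow> 'x \<Rightarrow> ereal" where
  "scal_phi f g x = Inf ((\<lambda>z. ereal (- g z)) ` f x)"

definition scal_phi_dir :: "('x::real_vector \<Rightarrow> 'z set) \<Rightarrow> ('z \<Rightarrow> real) \<Rightarrow> 'x \<Rightarrow> 'x \<Rightarrow> ereal" where
  "scal_phi_dir f g x u =
     (INF t\<in>{0<..}. ereal (1 / t) * inf_minus (scal_phi f g (x + t *\<^sub>R u)) (scal_phi f g x))"

end

theory Submission
  imports Defs
begin


lemma tvs_top: "lc_tvs T \<Longrightarrow> topspace T = UNIV"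
  by (simp add: lc_tvs_def)

lemma tvs_cont_aff:
  assumes "lc_tvs T"
  shows "continuous_map T T (\<lambda>y. a *\<^sub>R y + b)"
proof -
  have sc: "continuous_map (prod_topology euclideanreal T) T (\<lambda>(a, x). a *\<^sub>R x)"
   and ad: "continuous_map (prod_topology T T) T (\<lambda>(x, y). x + y)"
    using assms by (auto simp: lc_tvs_def)
  have "continuous_map T (prod_topology euclideanreal T) (\<lambda>y. (a, y))"
    by (simp add: continuous_map_paired)
  from continuous_map_compose[OF this sc]
  have c1: "continuous_map T T (\<lambda>y. a *\<^sub>R y)" by (simp add: o_def)
  have "continuous_map T (prod_topology T T) (\<lambda>y. (a *\<^sub>R y, b))"
    using c1 tvs_top[OF assms] by (simp add: continuous_map_paired)
  from continuous_map_compose[OF this ad] show ?thesis by (simp add: o_def)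
qed

lemma tvs_cont_line:
  assumes "lc_tvs T"
  shows "continuous_map euclideanreal T (\<lambda>t. t *\<^sub>R y + b)"
proof -
  have sc: "continuous_map (prod_topology euclideanreal T) T (\<lambda>(a, x). a *\<^sub>R x)"
   and ad: "continuous_map (prod_topology T T) T (\<lambda>(x, y). x + y)"
    using assms by (auto simp: lc_tvs_def)
  have "continuous_map euclideanreal (prod_topology euclideanreal T) (\<lambda>t. (t, y))"
    using tvs_top[OF assms] by (simp add: continuous_map_paired)
  from continuous_map_compose[OF this sc]
  have c1: "continuous_map euclideanreal T (\<lambda>t. t *\<^sub>R y)" by (simp add: o_def)
  have "continuous_map euclideanreal (prod_topology T T) (\<lambda>t. (t *\<^sub>R y, b))"
    using c1 tvs_top[OF assms] by (simp add: continuous_map_paired)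
  from continuous_map_compose[OF this ad] show ?thesis by (simp add: o_def)
qed

lemma tvs_open_aff:
  assumes "lc_tvs T" "openin T U"
  shows "openin T {y. a *\<^sub>R y + b \<in> U}"
  using openin_continuous_map_preimage[OF tvs_cont_aff[OF assms(1)] assms(2)] tvs_top[OF assms(1)]
  by simp

lemma tvs_absorb:
  assumes "lc_tvs T" "openin T U" "b \<in> U"
  shows "\<exists>d>0. \<forall>t. \<bar>t\<bar> < d \<longrightarrow> t *\<^sub>R y + b \<in> U"
proof -
  have "open {t. t *\<^sub>R y + b \<in> U}"
    using openin_continuous_map_preimage[OF tvs_cont_line[OF assms(1)] assms(2)]
    by simp
  moreover have "0 \<in> {t. t *\<^sub>R y + b \<in> U}" using assms by simp
  ultimately obtain d where "d>0" "ball 0 d \<subseteq> {t. t *\<^sub>R y + b \<in> U}"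
    using open_contains_ball by blast
  then show ?thesis by (auto simp: dist_real_def subset_iff)
qed



definition lin_rel :: "('a::real_vector \<Rightarrow> real) \<Rightarrow> ('a \<times> real) set \<Rightarrow> bool" where
  "lin_rel p G \<longleftrightarrow> (\<forall>x a b. (x,a)\<in>G \<longrightarrow> (x,b)\<in>G \<longrightarrow> a=b)
    \<and> (\<forall>x a y b. (x,a)\<in>G \<longrightarrow> (y,b)\<in>G \<longrightarrow> (x+y,a+b)\<in>G)
    \<and> (\<forall>x a c. (x,a)\<in>G \<longrightarrow> (c *\<^sub>R x, c*a)\<in>G)
    \<and> (\<forall>x a. (x,a)\<in>G \<longrightarrow> a \<le> p x)"

lemma hb_step:
  fixes p :: "'a::real_vector \<Rightarrow> real"
  assumes subadd: "\<And>x y. p (x+y) \<le> p x + p y"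
    and hom: "\<And>x c. c > 0 \<Longrightarrow> p (c *\<^sub>R x) = c * p x"
    and M: "lin_rel p M" and ne: "(0,0) \<in> M"
    and x1: "x1 \<notin> Domain M"
  shows "\<exists>M'. lin_rel p M' \<and> M \<subseteq> M' \<and> M' \<noteq> M"
proof -
  have fnc: "\<And>x a b. (x,a)\<in>M \<Longrightarrow> (x,b)\<in>M \<Longrightarrow> a=b"
   and add: "\<And>x a y b. (x,a)\<in>M \<Longrightarrow> (y,b)\<in>M \<Longrightarrow> (x+y,a+b)\<in>M"
   and scl: "\<And>x a c. (x,a)\<in>M \<Longrightarrow> (c *\<^sub>R x, c*a)\<in>M"
   and bd: "\<And>x a. (x,a)\<in>M \<Longrightarrow> a \<le> p x"
    using M unfolding lin_rel_def by blast+
  define L where "L = (\<lambda>(v,e). e - p (v - x1)) ` M"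
  define \<xi> where "\<xi> = Sup L"
  have key: "e - p (v - x1) \<le> p (u + x1) - b" if "(u,b)\<in>M" "(v,e)\<in>M" for u b v e
  proof -
    have "b + e \<le> p (u + v)" using bd[OF add[OF that]] .
    also have "\<dots> \<le> p (u + x1) + p (v - x1)"
      using subadd[of "u+x1" "v-x1"] by (simp add: algebra_simps)
    finally show ?thesis by simp
  qed
  have Lne: "L \<noteq> {}" using ne by (auto simp: L_def)
  have Lbd: "bdd_above L"
    unfolding bdd_above_def L_def using key[OF ne] by force
  have lo: "e - p (v - x1) \<le> \<xi>" if "(v,e)\<in>M" for v e
    unfolding \<xi>_def by (rule cSup_upper[OF _ Lbd]) (use that in \<open>force simp: L_def\<close>)
  have hi: "\<xi> \<le> p (u + x1) - b" if "(u,b)\<in>M" for u b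
    unfolding \<xi>_def by (rule cSup_least[OF Lne]) (use key[OF that] in \<open>auto simp: L_def\<close>)
  define M' where "M' = {(y + c *\<^sub>R x1, a + c * \<xi>) | y a c. (y,a) \<in> M}"
  have sub: "M \<subseteq> M'" unfolding M'_def by force
  have new: "(x1, \<xi>) \<in> M'" unfolding M'_def using ne by force
  have notin: "(x1, \<xi>) \<notin> M" using x1 by blast
  have uniq: "c = c' \<and> y = y'" if "(y,a)\<in>M" "(y',a')\<in>M" "y + c *\<^sub>R x1 = y' + c' *\<^sub>R x1"
    for y a c y' a' c'
  proof (cases "c = c'")
    case True then show ?thesis using that by simp
  next
    case False
    have e: "(c - c') *\<^sub>R x1 = y' + (-1) *\<^sub>R y" using that(3) by (simp add: algebra_simps)
    have "x1 = (1/(c-c')) *\<^sub>R ((c - c') *\<^sub>R x1)" using False by simp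
    then have "x1 = (1/(c-c')) *\<^sub>R (y' + (-1) *\<^sub>R y)" using e by simp
    moreover have "(y' + (-1) *\<^sub>R y, a' + (-1)*a) \<in> M" using add[OF that(2) scl[OF that(1)]] .
    ultimately have "x1 \<in> Domain M" using scl by (metis Domain.DomainI)
    then show ?thesis using x1 by blast
  qed
  have "lin_rel p M'"
    unfolding lin_rel_def
  proof (intro conjI allI impI)
    fix x a b assume "(x,a)\<in>M'" "(x,b)\<in>M'"
    then obtain y1 a1 c1 y2 a2 c2 where h: "(y1,a1)\<in>M" "(y2,a2)\<in>M" "x = y1 + c1 *\<^sub>R x1" "a = a1 + c1*\<xi>"
      "x = y2 + c2 *\<^sub>R x1" "b = a2 + c2*\<xi>" unfolding M'_def by blast
    then have "c1 = c2 \<and> y1 = y2" using uniq by metis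
    then show "a = b" using h fnc by metis
  next
    fix x a y b assume "(x,a)\<in>M'" "(y,b)\<in>M'"
    then obtain y1 a1 c1 y2 a2 c2 where h: "(y1,a1)\<in>M" "(y2,a2)\<in>M" "x = y1 + c1 *\<^sub>R x1" "a = a1 + c1*\<xi>"
      "y = y2 + c2 *\<^sub>R x1" "b = a2 + c2*\<xi>" unfolding M'_def by blast
    have "x + y = (y1 + y2) + (c1 + c2) *\<^sub>R x1" "a + b = (a1 + a2) + (c1+c2)*\<xi>"
      using h by (simp_all add: algebra_simps)
    then show "(x+y, a+b) \<in> M'" unfolding M'_def using add[OF h(1,2)] by blast
  next
    fix x a c assume "(x,a)\<in>M'"
    then obtain y1 a1 c1 where h: "(y1,a1)\<in>M" "x = y1 + c1 *\<^sub>R x1" "a = a1 + c1*\<xi>"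
      unfolding M'_def by blast
    have "c *\<^sub>R x = c *\<^sub>R y1 + (c*c1) *\<^sub>R x1" "c * a = c * a1 + (c*c1)*\<xi>"
      using h by (simp_all add: algebra_simps)
    then show "(c *\<^sub>R x, c*a) \<in> M'" unfolding M'_def using scl[OF h(1)] by blast
  next
    fix x a assume "(x,a)\<in>M'"
    then obtain y a1 c where h: "(y,a1)\<in>M" "x = y + c *\<^sub>R x1" "a = a1 + c*\<xi>"
      unfolding M'_def by blast
    consider "c = 0" | "c > 0" | "c < 0" by linarith
    then show "a \<le> p x"
    proof cases
      case 1 then show ?thesis using h bd by simp
    next
      case 2
      have m: "((1/c) *\<^sub>R y, (1/c)*a1) \<in> M" using scl[OF h(1)] .
      have "\<xi> \<le> p ((1/c) *\<^sub>R y + x1) - (1/c)*a1" using hi[OF m] .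
      then have "c * \<xi> \<le> c * p ((1/c) *\<^sub>R y + x1) - a1" using 2
        by (simp add: field_simps)
      also have "c * p ((1/c) *\<^sub>R y + x1) = p (c *\<^sub>R ((1/c) *\<^sub>R y + x1))"
        using hom[OF 2] by simp
      also have "c *\<^sub>R ((1/c) *\<^sub>R y + x1) = x" using 2 h(2) by (simp add: algebra_simps)
      finally show ?thesis using h(3) by simp
    next
      case 3
      define d where "d = - c"
      have d: "d > 0" using 3 d_def by simp
      have m: "((1/d) *\<^sub>R y, (1/d)*a1) \<in> M" using scl[OF h(1)] .
      have "(1/d)*a1 - p ((1/d) *\<^sub>R y - x1) \<le> \<xi>" using lo[OF m] .
      then have "a1 - d * p ((1/d) *\<^sub>R y - x1) \<le> d * \<xi>" using d
        by (simp add: field_simps)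
      also have "d * p ((1/d) *\<^sub>R y - x1) = p (d *\<^sub>R ((1/d) *\<^sub>R y - x1))"
        using hom[OF d] by simp
      also have "d *\<^sub>R ((1/d) *\<^sub>R y - x1) = x" using d h(2) d_def by (simp add: algebra_simps)
      finally show ?thesis using h(3) d_def by simp
    qed
  qed
  then show ?thesis using sub new notin by blast
qed

lemma hb_ext:
  fixes p :: "'a::real_vector \<Rightarrow> real"
  assumes subadd: "\<And>x y. p (x+y) \<le> p x + p y"
    and hom: "\<And>x c. c > 0 \<Longrightarrow> p (c *\<^sub>R x) = c * p x"
    and nn: "\<And>x. 0 \<le> p x" and u0: "u \<noteq> 0" and pu: "1 \<le> p u"
  shows "\<exists>g. linear g \<and> (\<forall>x. g x \<le> p x) \<and> g u = 1"
proof -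
  define G0 where "G0 = range (\<lambda>t. (t *\<^sub>R u, t))"
  have G0: "lin_rel p G0"
    unfolding lin_rel_def G0_def
  proof (intro conjI allI impI)
    fix x a b assume "(x, a) \<in> range (\<lambda>t. (t *\<^sub>R u, t))" "(x, b) \<in> range (\<lambda>t. (t *\<^sub>R u, t))"
    then show "a = b" using u0 by (auto simp: scaleR_cancel_right)
  next
    fix x a y b assume "(x, a) \<in> range (\<lambda>t. (t *\<^sub>R u, t))" "(y, b) \<in> range (\<lambda>t. (t *\<^sub>R u, t))"
    then show "(x + y, a + b) \<in> range (\<lambda>t. (t *\<^sub>R u, t))"
      by (auto simp: scaleR_add_left intro!: image_eqI[where x="a+b"])
  next
    fix x a c assume "(x, a) \<in> range (\<lambda>t. (t *\<^sub>R u, t))"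
    then show "(c *\<^sub>R x, c * a) \<in> range (\<lambda>t. (t *\<^sub>R u, t))"
      by (auto intro!: image_eqI[where x="c*a"])
  next
    fix x a assume "(x, a) \<in> range (\<lambda>t. (t *\<^sub>R u, t))"
    then obtain t where x: "x = t *\<^sub>R u" "a = t" by auto
    show "a \<le> p x"
    proof (cases "t > 0")
      case True then show ?thesis using x hom[OF True, of u] pu
        by (simp add: mult_le_cancel_left1)
    next
      case False then show ?thesis using x nn[of x] by simp
    qed
  qed
  define A where "A = {G. lin_rel p G \<and> G0 \<subseteq> G}"
  have "\<forall>C\<in>chains A. \<exists>U\<in>A. \<forall>X\<in>C. X \<subseteq> U"
  proof
    fix C assume C: "C \<in> chains A"
    show "\<exists>U\<in>A. \<forall>X\<in>C. X \<subseteq> U"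
    proof (cases "C = {}")
      case True then show ?thesis using G0 by (auto simp: A_def)
    next
      case False
      have CA: "C \<subseteq> A" and ch: "\<And>X Y. X \<in> C \<Longrightarrow> Y \<in> C \<Longrightarrow> X \<subseteq> Y \<or> Y \<subseteq> X"
        using C by (auto simp: chains_def chain_subset_def)
      have lr: "\<And>X. X \<in> C \<Longrightarrow> lin_rel p X" using CA by (auto simp: A_def)
      have two: "\<exists>Z\<in>C. (x,a) \<in> Z \<and> (y,b) \<in> Z" if "(x,a) \<in> \<Union>C" "(y,b) \<in> \<Union>C" for x a y b
        using that ch by blast
      have "lin_rel p (\<Union>C)"
        unfolding lin_rel_def
      proof (intro conjI allI impI)
        fix x a b assume "(x,a) \<in> \<Union>C" "(x,b) \<in> \<Union>C"
        then obtain Z where "Z \<in> C" "(x,a) \<in> Z" "(x,b) \<in> Z" using two by blast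
        then show "a = b" using lr unfolding lin_rel_def by blast
      next
        fix x a y b assume "(x,a) \<in> \<Union>C" "(y,b) \<in> \<Union>C"
        then obtain Z where "Z \<in> C" "(x,a) \<in> Z" "(y,b) \<in> Z" using two by blast
        then show "(x+y, a+b) \<in> \<Union>C" using lr unfolding lin_rel_def by blast
      next
        fix x a c assume "(x,a) \<in> \<Union>C"
        then obtain Z where "Z \<in> C" "(x,a) \<in> Z" by blast
        then show "(c *\<^sub>R x, c*a) \<in> \<Union>C" using lr unfolding lin_rel_def by blast
      next
        fix x a assume "(x,a) \<in> \<Union>C"
        then obtain Z where "Z \<in> C" "(x,a) \<in> Z" by blast
        then show "a \<le> p x" using lr unfolding lin_rel_def by blast
      qed
      moreover have "G0 \<subseteq> \<Union>C" using False CA by (auto simp: A_def)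
      ultimately show ?thesis by (auto simp: A_def)
    qed
  qed
  from Zorn_Lemma2[OF this] obtain M where MA: "M \<in> A" and max: "\<And>X. X \<in> A \<Longrightarrow> M \<subseteq> X \<Longrightarrow> X = M"
    by blast
  have M: "lin_rel p M" and G0M: "G0 \<subseteq> M" using MA by (auto simp: A_def)
  have "((0::real) *\<^sub>R u, 0::real) \<in> G0" unfolding G0_def by blast
  then have ne: "(0,0) \<in> M" using G0M by auto
  have dom: "x \<in> Domain M" for x
  proof (rule ccontr)
    assume "x \<notin> Domain M"
    from hb_step[OF subadd hom M ne this] obtain M' where "lin_rel p M'" "M \<subseteq> M'" "M' \<noteq> M"
      by blast
    then show False using max[of M'] G0M by (auto simp: A_def)
  qed
  have fnc: "\<And>x a b. (x,a)\<in>M \<Longrightarrow> (x,b)\<in>M \<Longrightarrow> a=b"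
   and add: "\<And>x a y b. (x,a)\<in>M \<Longrightarrow> (y,b)\<in>M \<Longrightarrow> (x+y,a+b)\<in>M"
   and scl: "\<And>x a c. (x,a)\<in>M \<Longrightarrow> (c *\<^sub>R x, c*a)\<in>M"
   and bd: "\<And>x a. (x,a)\<in>M \<Longrightarrow> a \<le> p x"
    using M unfolding lin_rel_def by blast+
  define g where "g x = (THE a. (x,a) \<in> M)" for x
  have gM: "(x, g x) \<in> M" for x
  proof -
    obtain a where "(x,a) \<in> M" using dom[of x] by blast
    then have "\<exists>!a. (x,a) \<in> M" using fnc by blast
    then show ?thesis unfolding g_def by (rule theI')
  qed
  have geq: "(x,a) \<in> M \<Longrightarrow> g x = a" for x a using fnc gM by blast
  have "linear g"
  proof (rule linearI)
    fix x y show "g (x + y) = g x + g y" using geq[OF add[OF gM gM]] .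
  next
    fix c x show "g (c *\<^sub>R x) = c *\<^sub>R g x" using geq[OF scl[OF gM]] by simp
  qed
  moreover have "\<forall>x. g x \<le> p x" using bd gM by blast
  moreover have "((1::real) *\<^sub>R u, 1::real) \<in> G0" unfolding G0_def by blast
  then have "(u, 1) \<in> M" using G0M by auto
  ultimately show ?thesis using geq by blast
qed



definition mink :: "'z::real_vector set \<Rightarrow> 'z \<Rightarrow> real" where
  "mink Q y = Inf {l. 0 < l \<and> (1/l) *\<^sub>R y \<in> Q}"

locale mk =
  fixes T :: "'z::real_vector topology" and Q :: "'z set"
  assumes tvs: "lc_tvs T" and op: "openin T Q" and cv: "convex Q" and z: "0 \<in> Q"
begin

abbreviation "S y \<equiv> {l. 0 < l \<and> (1/l) *\<^sub>R y \<in> Q}"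

lemma S_ne: "S y \<noteq> {}"
proof -
  obtain d where d: "d > 0" "\<And>t. \<bar>t\<bar> < d \<Longrightarrow> t *\<^sub>R y + 0 \<in> Q"
    using tvs_absorb[OF tvs op z] by blast
  have "(d/2) *\<^sub>R y \<in> Q" using d by simp
  then have "2/d \<in> S y" using d by simp
  then show ?thesis by blast
qed

lemma S_bdd: "bdd_below (S y)"
  by (rule bdd_belowI[of _ 0]) simp

lemma mink_nn: "0 \<le> mink Q y"
  unfolding mink_def by (rule cInf_greatest[OF S_ne]) simp

lemma S_up: "l \<in> S y \<Longrightarrow> l \<le> l' \<Longrightarrow> l' \<in> S y"
proof -
  assume l: "l \<in> S y" "l \<le> l'"
  then have pos: "0 < l" "0 < l'" by auto
  have "(l/l') *\<^sub>R ((1/l) *\<^sub>R y) + (1 - l/l') *\<^sub>R 0 \<in> Q"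
    using convexD[OF cv, of "(1/l) *\<^sub>R y" 0 "l/l'" "1 - l/l'"] l pos z
    by (simp add: divide_le_eq_1)
  then have "(1/l') *\<^sub>R y \<in> Q" using pos by simp
  then show ?thesis using pos by simp
qed

lemma S_lt: "mink Q y < c \<Longrightarrow> c \<in> S y"
proof -
  assume "mink Q y < c"
  then obtain l where "l \<in> S y" "l < c" unfolding mink_def using cInf_lessD[OF S_ne] by blast
  then show ?thesis using S_up by (meson less_imp_le)
qed

lemma mink_le: "l \<in> S y \<Longrightarrow> mink Q y \<le> l"
  unfolding mink_def by (rule cInf_lower[OF _ S_bdd])

lemma mink_subadd: "mink Q (x + y) \<le> mink Q x + mink Q y"
proof (rule field_le_epsilon)
  fix e :: real assume e: "0 < e"
  define a where "a = mink Q x + e/2"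
  define b where "b = mink Q y + e/2"
  have aS: "a \<in> S x" using S_lt[of x a] e by (simp add: a_def)
  have bS: "b \<in> S y" using S_lt[of y b] e by (simp add: b_def)
  have pos: "0 < a" "0 < b" using aS bS by auto
  have "(a/(a+b)) *\<^sub>R ((1/a) *\<^sub>R x) + (b/(a+b)) *\<^sub>R ((1/b) *\<^sub>R y) \<in> Q"
    using convexD[OF cv, of "(1/a) *\<^sub>R x" "(1/b) *\<^sub>R y" "a/(a+b)" "b/(a+b)"] aS bS pos
    by (simp add: add_divide_distrib[symmetric])
  also have "(a/(a+b)) *\<^sub>R ((1/a) *\<^sub>R x) + (b/(a+b)) *\<^sub>R ((1/b) *\<^sub>R y) = (1/(a+b)) *\<^sub>R (x + y)"
    using pos by (simp add: scaleR_add_right)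
  finally have "a + b \<in> S (x+y)" using pos by simp
  then have "mink Q (x+y) \<le> a + b" by (rule mink_le)
  then show "mink Q (x+y) \<le> mink Q x + mink Q y + e" by (simp add: a_def b_def)
qed

lemma mink_hom_le: "0 < c \<Longrightarrow> mink Q (c *\<^sub>R y) \<le> c * mink Q y"
proof -
  assume c: "0 < c"
  have "mink Q (c *\<^sub>R y) / c \<le> l" if "l \<in> S y" for l
  proof -
    have "c * l \<in> S (c *\<^sub>R y)" using that c by simp
    then have "mink Q (c *\<^sub>R y) \<le> c * l" by (rule mink_le)
    then show ?thesis using c by (simp add: divide_le_eq mult.commute)
  qed
  then have "mink Q (c *\<^sub>R y) / c \<le> mink Q y"
    unfolding mink_def[of Q y] by (intro cInf_greatest[OF S_ne]) blast
  then show ?thesis using c by (simp add: divide_le_eq mult.commute)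
qed

lemma mink_hom: "0 < c \<Longrightarrow> mink Q (c *\<^sub>R y) = c * mink Q y"
proof -
  assume c: "0 < c"
  have "mink Q ((1/c) *\<^sub>R (c *\<^sub>R y)) \<le> (1/c) * mink Q (c *\<^sub>R y)"
    using mink_hom_le[of "1/c" "c *\<^sub>R y"] c by simp
  then have "mink Q y \<le> (1/c) * mink Q (c *\<^sub>R y)" using c by simp
  then have "c * mink Q y \<le> mink Q (c *\<^sub>R y)" using c by (simp add: field_simps)
  then show ?thesis using mink_hom_le[OF c, of y] by simp
qed

lemma mink_in: "y \<in> Q \<Longrightarrow> mink Q y < 1"
proof -
  assume y: "y \<in> Q"
  obtain d where d: "d > 0" "\<And>t. \<bar>t\<bar> < d \<Longrightarrow> t *\<^sub>R y + y \<in> Q"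
    using tvs_absorb[OF tvs op y] by blast
  have "(d/2) *\<^sub>R y + y \<in> Q" using d by simp
  then have "(1 + d/2) *\<^sub>R y \<in> Q" by (simp add: algebra_simps)
  then have "1/(1 + d/2) \<in> S y" using d by simp
  then have "mink Q y \<le> 1/(1+d/2)" by (rule mink_le)
  also have "\<dots> < 1" using d by simp
  finally show ?thesis .
qed

lemma mink_out: "y \<notin> Q \<Longrightarrow> 1 \<le> mink Q y"
proof (rule ccontr)
  assume "y \<notin> Q" "\<not> 1 \<le> mink Q y"
  then have "1 \<in> S y" using S_lt[of y 1] by simp
  then show False using \<open>y \<notin> Q\<close> by simp
qed

lemma cont_dominated:
  assumes lin: "linear g" and dom: "\<And>y. g y \<le> mink Q y"
  shows "continuous_map T euclideanreal g"
proof -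
  define N where "N = Q \<inter> {y. (-1) *\<^sub>R y + 0 \<in> Q}"
  have Nop: "openin T N" unfolding N_def using op tvs_open_aff[OF tvs op] by blast
  have N0: "0 \<in> N" using z by (simp add: N_def)
  have Nb: "\<bar>g y\<bar> < 1" if "y \<in> N" for y
  proof -
    have "g y < 1" using dom[of y] mink_in[of y] that by (simp add: N_def)
    moreover have "g (-y) < 1" using dom[of "-y"] mink_in[of "-y"] that by (simp add: N_def)
    moreover have "g (-y) = - g y" using lin by (simp add: linear_neg)
    ultimately show ?thesis by simp
  qed
  have "openin T {x \<in> topspace T. g x \<in> U}" if "open U" for U
  proof (subst openin_subopen, intro ballI)
    fix y0 assume "y0 \<in> {x \<in> topspace T. g x \<in> U}"
    then have "g y0 \<in> U" by simp
    then obtain e where e: "e > 0" "ball (g y0) e \<subseteq> U" using \<open>open U\<close> open_contains_ball by blast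
    define V where "V = {y. (1/e) *\<^sub>R y + (- ((1/e) *\<^sub>R y0)) \<in> N}"
    have Vop: "openin T V" unfolding V_def by (rule tvs_open_aff[OF tvs Nop])
    have "y0 \<in> V" using N0 by (simp add: V_def)
    moreover have "V \<subseteq> {x \<in> topspace T. g x \<in> U}"
    proof
      fix y assume "y \<in> V"
      then have "(1/e) *\<^sub>R y + (- ((1/e) *\<^sub>R y0)) \<in> N" unfolding V_def mem_Collect_eq .
      then have "\<bar>g ((1/e) *\<^sub>R y + (- ((1/e) *\<^sub>R y0)))\<bar> < 1" by (rule Nb)
      moreover have "g ((1/e) *\<^sub>R y + (- ((1/e) *\<^sub>R y0))) = (g y - g y0) / e"
      proof -
        have "(1/e) *\<^sub>R y + (- ((1/e) *\<^sub>R y0)) = (1/e) *\<^sub>R (y - y0)" by (simp only: diff_conv_add_uminus scaleR_add_right scaleR_minus_right)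
        then have "g ((1/e) *\<^sub>R y + (- ((1/e) *\<^sub>R y0))) = (1/e) * g (y - y0)"
          using linear_scale[OF lin, of "1/e" "y - y0"] by (simp only: real_scaleR_def)
        also have "g (y - y0) = g y - g y0" by (rule linear_diff[OF lin])
        finally show ?thesis by simp
      qed
      ultimately have "\<bar>(g y - g y0) / e\<bar> < 1" by metis
      then have "\<bar>g y - g y0\<bar> / e < 1" using e by (simp only: abs_divide abs_of_pos)
      then have "\<bar>g y - g y0\<bar> < e" using e by (simp add: divide_less_eq)
      then have "g y \<in> U" using e by (auto simp: dist_real_def)
      then show "y \<in> {x \<in> topspace T. g x \<in> U}" using tvs_top[OF tvs] by simp
    qed
    ultimately show "\<exists>T'. openin T T' \<and> y0 \<in> T' \<and> T' \<subseteq> {x \<in> topspace T. g x \<in> U}"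
      using Vop by blast
  qed
  then show ?thesis unfolding continuous_map_def by simp
qed

end



lemma tvs_sep:
  assumes tvs: "lc_tvs T" and Kc: "closedin T K" and Kv: "convex K" and k0: "k0 \<in> K"
    and zK: "z \<notin> K"
  shows "\<exists>g\<in>topdual T. \<exists>\<delta>>0. \<forall>k\<in>K. g k \<le> g z - \<delta>"
proof -
  have top: "topspace T = UNIV" using tvs_top[OF tvs] .
  have "openin T (UNIV - K)" using Kc top by (metis closedin_def)
  then have Vop: "openin T {w. 1 *\<^sub>R w + z \<in> UNIV - K}" by (rule tvs_open_aff[OF tvs])
  have "0 \<in> {w. 1 *\<^sub>R w + z \<in> UNIV - K}" using zK by simp
  then obtain W where W: "openin T W" "convex W" "0 \<in> W" "W \<subseteq> {w. 1 *\<^sub>R w + z \<in> UNIV - K}"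
    using Vop tvs unfolding lc_tvs_def by blast
  have WK: "w \<in> W \<Longrightarrow> z + w \<notin> K" for w using W(4) by (auto simp: add.commute)
  define Q where "Q = {k - k0 - w | k w. k \<in> K \<and> w \<in> W}"
  have Qop: "openin T Q"
  proof (subst openin_subopen, intro ballI)
    fix y assume "y \<in> Q"
    then obtain k w where kw: "k \<in> K" "w \<in> W" "y = k - k0 - w" unfolding Q_def by blast
    define N where "N = {y'. (-1) *\<^sub>R y' + (k - k0) \<in> W}"
    have "openin T N" unfolding N_def by (rule tvs_open_aff[OF tvs W(1)])
    moreover have "y \<in> N" using kw by (simp add: N_def)
    moreover have "N \<subseteq> Q"
    proof
      fix y' assume "y' \<in> N"
      then have "(-1) *\<^sub>R y' + (k - k0) \<in> W" by (simp add: N_def)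
      moreover have "y' = k - k0 - ((-1) *\<^sub>R y' + (k - k0))" by simp
      ultimately show "y' \<in> Q" unfolding Q_def using kw(1) by blast
    qed
    ultimately show "\<exists>T'. openin T T' \<and> y \<in> T' \<and> T' \<subseteq> Q" by blast
  qed
  have Qcv: "convex Q"
    unfolding convex_def
  proof (intro ballI allI impI)
    fix x y :: 'a and u v :: real
    assume x: "x \<in> Q" and y: "y \<in> Q" and uv: "0 \<le> u" "0 \<le> v" "u + v = 1"
    obtain k1 w1 where 1: "k1 \<in> K" "w1 \<in> W" "x = k1 - k0 - w1" using x unfolding Q_def by blast
    obtain k2 w2 where 2: "k2 \<in> K" "w2 \<in> W" "y = k2 - k0 - w2" using y unfolding Q_def by blast
    have "u *\<^sub>R k1 + v *\<^sub>R k2 \<in> K" using convexD[OF Kv 1(1) 2(1) uv] .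
    moreover have "u *\<^sub>R w1 + v *\<^sub>R w2 \<in> W" using convexD[OF W(2) 1(2) 2(2) uv] .
    moreover have "u *\<^sub>R x + v *\<^sub>R y = (u *\<^sub>R k1 + v *\<^sub>R k2) - k0 - (u *\<^sub>R w1 + v *\<^sub>R w2)"
    proof -
      have "u *\<^sub>R x + v *\<^sub>R y = (u *\<^sub>R k1 + v *\<^sub>R k2) - (u + v) *\<^sub>R k0 - (u *\<^sub>R w1 + v *\<^sub>R w2)"
        unfolding 1(3) 2(3) by (simp add: algebra_simps)
      then show ?thesis using uv(3) by simp
    qed
    ultimately show "u *\<^sub>R x + v *\<^sub>R y \<in> Q" unfolding Q_def by blast
  qed
  have Q0: "0 \<in> Q" unfolding Q_def using k0 W(3) by force
  interpret mk T Q by unfold_locales (use tvs Qop Qcv Q0 in auto)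
  define p where "p = z - k0"
  have pQ: "p \<notin> Q"
  proof
    assume "p \<in> Q"
    then obtain k w where kw: "k \<in> K" "w \<in> W" "p = k - k0 - w" unfolding Q_def by blast
    then have "z + w = k" by (simp add: p_def algebra_simps)
    then show False using WK[OF kw(2)] kw(1) by simp
  qed
  have p0: "p \<noteq> 0" using zK k0 by (auto simp: p_def)
  obtain g where g: "linear g" "\<And>x. g x \<le> mink Q x" "g p = 1"
    using hb_ext[of "mink Q" p] mink_subadd mink_hom mink_nn p0 mink_out[OF pQ] by blast
  have gc: "continuous_map T euclideanreal g" using cont_dominated[OF g(1)] g(2) by blast
  have gd: "g \<in> topdual T" using g(1) gc by (simp add: topdual_def)
  obtain d where d: "d > 0" "\<And>t. \<bar>t\<bar> < d \<Longrightarrow> t *\<^sub>R (- p) + 0 \<in> W"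
    using tvs_absorb[OF tvs W(1) W(3)] by blast
  define w0 where "w0 = (d/2) *\<^sub>R (- p)"
  have w0: "w0 \<in> W" using d by (simp add: w0_def)
  have gw0: "g w0 = - (d/2)" using g(1) g(3) by (simp add: w0_def linear_scale linear_neg)
  have "g k \<le> g z - d/2" if k: "k \<in> K" for k
  proof -
    have "k - k0 - w0 \<in> Q" unfolding Q_def using k w0 by blast
    then have "g (k - k0 - w0) < 1" using g(2) mink_in by (meson le_less_trans)
    moreover have "g (k - k0 - w0) = g k - g k0 - g w0" using g(1) by (simp add: linear_diff)
    moreover have "g z - g k0 = 1" using g(1) g(3) by (simp add: p_def linear_diff)
    ultimately show ?thesis using gw0 by simp
  qed
  then show ?thesis using gd d(1) by (intro bexI[of _ g] exI[of _ "d/2"]) auto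
qed



lemma conv_mem:
  assumes "lc_tvs T" "set_convex_fun T f" "0 < t" "t < 1" "a \<in> f x1" "b \<in> f x2"
  shows "t *\<^sub>R a + (1-t) *\<^sub>R b \<in> f (t *\<^sub>R x1 + (1-t) *\<^sub>R x2)"
proof -
  have "t *\<^sub>R a + (1-t) *\<^sub>R b \<in> {a + b | a b. a \<in> set_scale t (f x1) \<and> b \<in> set_scale (1-t) (f x2)}"
    using assms(5,6) unfolding set_scale_def by blast
  also have "\<dots> \<subseteq> oplus_cl T (set_scale t (f x1)) (set_scale (1 - t) (f x2))"
    unfolding oplus_cl_def by (rule closure_of_subset) (simp add: tvs_top[OF assms(1)])
  also have "\<dots> \<subseteq> f (t *\<^sub>R x1 + (1-t) *\<^sub>R x2)" using assms(2-4) unfolding set_convex_fun_def by blast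
  finally show ?thesis .
qed

lemma G_eq: "A \<in> Gspace T C \<Longrightarrow> A = T closure_of (convex hull {a + c | a c. a \<in> A \<and> c \<in> C})"
  unfolding Gspace_def mem_Collect_eq .

lemma G_closed: "A \<in> Gspace T C \<Longrightarrow> closedin T A"
  by (subst G_eq, assumption) (rule closedin_closure_of)

lemma G_upper:
  assumes "lc_tvs T" "A \<in> Gspace T C" "a \<in> A" "c \<in> C"
  shows "a + c \<in> A"
proof -
  have "a + c \<in> {a + c | a c. a \<in> A \<and> c \<in> C}" using assms by blast
  also have "\<dots> \<subseteq> convex hull {a + c | a c. a \<in> A \<and> c \<in> C}" by (rule hull_subset)
  also have "\<dots> \<subseteq> T closure_of (convex hull {a + c | a c. a \<in> A \<and> c \<in> C})"
    by (rule closure_of_subset) (simp add: tvs_top[OF assms(1)])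
  also have "\<dots> = A" using G_eq[OF assms(2)] by (rule sym)
  finally show ?thesis .
qed

lemma f_convex:
  assumes "lc_tvs T" "set_convex_fun T f"
  shows "convex (f x)"
  unfolding convex_alt
proof (intro ballI allI impI)
  fix a b and u :: real assume ab: "a \<in> f x" "b \<in> f x" and u: "0 \<le> u \<and> u \<le> 1"
  consider "u = 0" | "u = 1" | "0 < u \<and> u < 1" using u by linarith
  then show "(1 - u) *\<^sub>R a + u *\<^sub>R b \<in> f x"
  proof cases
    case 3
    have "u *\<^sub>R b + (1-u) *\<^sub>R a \<in> f (u *\<^sub>R x + (1-u) *\<^sub>R x)"
      using conv_mem[OF assms, of u b x a x] 3 ab by blast
    then show ?thesis by (simp add: algebra_simps flip: scaleR_add_left)
  qed (use ab in auto)
qed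

lemma phi_le: "w \<in> f x \<Longrightarrow> scal_phi f g x \<le> ereal (- g w)"
  unfolding scal_phi_def by (rule INF_lower)

lemma phi_lt: "scal_phi f g x < c \<Longrightarrow> \<exists>w\<in>f x. ereal (- g w) < c"
  unfolding scal_phi_def by (simp add: INF_less_iff)

lemma phi_empty: "f x = {} \<Longrightarrow> scal_phi f g x = \<infinity>"
  unfolding scal_phi_def by (simp add: top_ereal_def)

lemma phi_fin: "w \<in> f x \<Longrightarrow> scal_phi f g x \<noteq> -\<infinity> \<Longrightarrow> \<exists>a. scal_phi f g x = ereal a"
  using phi_le[of w f x g] by (cases "scal_phi f g x") auto

lemma im_inf: "inf_minus r \<infinity> = -\<infinity>"
proof -
  have "inf_minus r \<infinity> \<le> ereal t" for t
    unfolding inf_minus_def by (rule Inf_lower) (auto simp: inf_plus_def)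
  then show ?thesis by (rule ereal_bot)
qed

lemma im_neg: "r < ereal a \<Longrightarrow> inf_minus r (ereal a) < 0"
proof -
  assume r: "r < ereal a"
  obtain t where t: "t < 0" "r \<le> ereal (a + t)"
  proof (cases r)
    case (real b) then show ?thesis using r that[of "b - a"] by simp
  next
    case PInf then show ?thesis using r by simp
  next
    case MInf then show ?thesis using that[of "-1"] by simp
  qed
  have "inf_minus r (ereal a) \<le> ereal t"
    unfolding inf_minus_def by (rule Inf_lower) (use t in \<open>auto simp: inf_plus_def\<close>)
  moreover have "ereal t < 0" using t(1) by simp
  ultimately show ?thesis by (rule le_less_trans)
qed

lemma im_neg_rev: "inf_minus r (ereal a) < 0 \<Longrightarrow> r < ereal a"
proof -
  assume "inf_minus r (ereal a) < 0"
  then obtain s where "s \<in> {ereal t |t. r \<le> inf_plus (ereal a) (ereal t)}" "s < 0"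
    unfolding inf_minus_def Inf_less_iff by blast
  then obtain t where "r \<le> ereal (a + t)" "t < 0" by (auto simp: inf_plus_def)
  moreover have "ereal (a + t) < ereal a" using \<open>t < 0\<close> by simp
  ultimately show ?thesis using \<open>r \<le> ereal (a + t)\<close> by (meson le_less_trans)
qed

lemma ereal_pos_mult_neg: "0 < c \<Longrightarrow> X < 0 \<Longrightarrow> ereal c * X < 0"
  by (cases X) (auto simp: mult_pos_neg)

lemma ereal_pos_mult_neg_rev: "0 < c \<Longrightarrow> ereal c * X < 0 \<Longrightarrow> X < 0"
  by (cases X) (auto simp: zero_less_mult_iff mult_less_0_iff)

lemma dir_neg: "scal_phi_dir f g x u < 0 \<Longrightarrow>
   \<exists>s>0. inf_minus (scal_phi f g (x + s *\<^sub>R u)) (scal_phi f g x) < 0"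
proof -
  assume "scal_phi_dir f g x u < 0"
  then obtain s where "s > 0" "ereal (1/s) * inf_minus (scal_phi f g (x + s *\<^sub>R u)) (scal_phi f g x) < 0"
    unfolding scal_phi_dir_def INF_less_iff by auto
  then show ?thesis using ereal_pos_mult_neg_rev[of "1/s"] by auto
qed

lemma dir_neg_rev: "s > 0 \<Longrightarrow> inf_minus (scal_phi f g (x + s *\<^sub>R u)) (scal_phi f g x) < 0
   \<Longrightarrow> scal_phi_dir f g x u < 0"
proof -
  assume s: "s > 0" and h: "inf_minus (scal_phi f g (x + s *\<^sub>R u)) (scal_phi f g x) < 0"
  have "scal_phi_dir f g x u \<le> ereal (1/s) * inf_minus (scal_phi f g (x + s *\<^sub>R u)) (scal_phi f g x)"
    unfolding scal_phi_dir_def by (rule INF_lower) (use s in simp)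
  also have "\<dots> < 0" using ereal_pos_mult_neg[OF _ h] s by simp
  finally show ?thesis .
qed



theorem mainTheorem14:
  fixes T :: "'z::real_vector topology" and C :: "'z set"
    and f :: "'x::real_vector \<Rightarrow> 'z set" and x0 :: 'x
  assumes "lc_tvs T"
    and "closedin T C" and "convex C" and "cone C" and "0 \<in> C"
    and "neg_dual_cone T C - {\<lambda>_. 0} \<noteq> {}"
    and "\<forall>x. f x \<in> Gspace T C"
    and "set_convex_fun T f"
    and "x0 \<in> sdom f"
  shows "(\<forall>x. f x \<noteq> f x0 \<longrightarrow>
            (\<exists>g \<in> neg_dual_cone T C - {\<lambda>_. 0}.
               scal_phi f g x \<noteq> -\<infinity> \<and> scal_phi_dir f g x (x0 - x) < 0))
     \<longleftrightarrow>
     (\<forall>x \<in> sdom f. f x \<noteq> f x0 \<longrightarrow>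
        (let I = T closure_of (convex hull (\<Union>t\<in>{0<..<1}. f (x0 + t *\<^sub>R (x - x0))))
         in f x \<subseteq> I \<and> I \<noteq> f x))"
proof -
  note tvs = assms(1)
  have top: "topspace T = UNIV" using tvs_top[OF tvs] .
  have fx_closed: "closedin T (f x)" for x using G_closed assms(7) by blast
  have fx_upper: "a \<in> f x \<Longrightarrow> c \<in> C \<Longrightarrow> a + c \<in> f x" for x a c
    using G_upper[OF tvs] assms(7) by blast
  have fx_conv: "convex (f x)" for x using f_convex[OF assms(1,8)] .
  have cm: "\<And>t a b x1 x2. 0 < t \<Longrightarrow> t < 1 \<Longrightarrow> a \<in> f x1 \<Longrightarrow> b \<in> f x2 \<Longrightarrow>
      t *\<^sub>R a + (1-t) *\<^sub>R b \<in> f (t *\<^sub>R x1 + (1-t) *\<^sub>R x2)"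
    using conv_mem[OF assms(1,8)] by blast
  have "f x0 \<noteq> {}" using assms(9) by (simp add: sdom_def)
  then obtain z0 where z0: "z0 \<in> f x0" by blast
  define I where "I x = T closure_of (convex hull (\<Union>t\<in>{0<..<1}. f (x0 + t *\<^sub>R (x - x0))))" for x
  have Isub: "w \<in> I x" if "0 < t" "t < 1" "w \<in> f (x0 + t *\<^sub>R (x - x0))" for x t w
  proof -
    have "t \<in> {0<..<1}" using that by simp
    then have "w \<in> (\<Union>t\<in>{0<..<1}. f (x0 + t *\<^sub>R (x - x0)))" using that(3) by (rule UN_I)
    also have "\<dots> \<subseteq> convex hull (\<Union>t\<in>{0<..<1}. f (x0 + t *\<^sub>R (x - x0)))" by (rule hull_subset)
    also have "\<dots> \<subseteq> I x" unfolding I_def by (rule closure_of_subset) (simp add: top)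
    finally show ?thesis .
  qed
  have fI: "f x \<subseteq> I x" for x
  proof
    fix z assume z: "z \<in> f x"
    show "z \<in> I x"
      unfolding I_def in_closure_of
    proof (intro conjI allI impI)
      show "z \<in> topspace T" by (simp add: top)
    next
      fix U assume U: "z \<in> U \<and> openin T U"
      obtain d where d: "d > 0" "\<And>s. \<bar>s\<bar> < d \<Longrightarrow> s *\<^sub>R (z0 - z) + z \<in> U"
        using tvs_absorb[OF tvs, of U z "z0 - z"] U by blast
      define s where "s = min (1/2) (d/2)"
      have s: "0 < s" "s < 1" "\<bar>s\<bar> < d" using d(1) by (auto simp: s_def)
      have "(1 - s) *\<^sub>R z + (1 - (1 - s)) *\<^sub>R z0 \<in> f ((1 - s) *\<^sub>R x + (1 - (1 - s)) *\<^sub>R x0)"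
        using cm[of "1 - s" z x z0 x0] s z z0 by simp
      moreover have "(1 - s) *\<^sub>R x + (1 - (1 - s)) *\<^sub>R x0 = x0 + (1 - s) *\<^sub>R (x - x0)"
        by (simp add: algebra_simps)
      moreover have "(1 - s) *\<^sub>R z + (1 - (1 - s)) *\<^sub>R z0 = s *\<^sub>R (z0 - z) + z"
        by (simp add: algebra_simps)
      ultimately have "s *\<^sub>R (z0 - z) + z \<in> f (x0 + (1 - s) *\<^sub>R (x - x0))" by simp
      moreover have "1 - s \<in> {0<..<1}" using s by simp
      ultimately have "s *\<^sub>R (z0 - z) + z \<in> (\<Union>t\<in>{0<..<1}. f (x0 + t *\<^sub>R (x - x0)))"
        by (intro UN_I)
      then have "s *\<^sub>R (z0 - z) + z \<in> convex hull (\<Union>t\<in>{0<..<1}. f (x0 + t *\<^sub>R (x - x0)))"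
        by (rule hull_inc)
      then show "\<exists>y. y \<in> convex hull (\<Union>t\<in>{0<..<1}. f (x0 + t *\<^sub>R (x - x0))) \<and> y \<in> U"
        using d(2)[OF s(3)] by blast
    qed
  qed
  have main: "(\<forall>x. f x \<noteq> f x0 \<longrightarrow>
            (\<exists>g \<in> neg_dual_cone T C - {\<lambda>_. 0}.
               scal_phi f g x \<noteq> -\<infinity> \<and> scal_phi_dir f g x (x0 - x) < 0))
     \<longleftrightarrow> (\<forall>x \<in> sdom f. f x \<noteq> f x0 \<longrightarrow> f x \<subseteq> I x \<and> I x \<noteq> f x)"
  proof
    assume L: "\<forall>x. f x \<noteq> f x0 \<longrightarrow>
            (\<exists>g \<in> neg_dual_cone T C - {\<lambda>_. 0}.
               scal_phi f g x \<noteq> -\<infinity> \<and> scal_phi_dir f g x (x0 - x) < 0)"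
    show "\<forall>x \<in> sdom f. f x \<noteq> f x0 \<longrightarrow> f x \<subseteq> I x \<and> I x \<noteq> f x"
    proof (intro ballI impI conjI)
      fix x assume xd: "x \<in> sdom f" and ne: "f x \<noteq> f x0"
      show "f x \<subseteq> I x" by (rule fI)
      obtain g where g: "g \<in> neg_dual_cone T C" "scal_phi f g x \<noteq> -\<infinity>"
        "scal_phi_dir f g x (x0 - x) < 0" using L ne by blast
      have lin: "linear g" using g(1) by (simp add: neg_dual_cone_def topdual_def)
      obtain w1 where w1: "w1 \<in> f x" using xd unfolding sdom_def by blast
      obtain a where a: "scal_phi f g x = ereal a" using phi_fin[of w1 f x g, OF w1 g(2)] by blast
      obtain s where s: "s > 0" "inf_minus (scal_phi f g (x + s *\<^sub>R (x0 - x))) (scal_phi f g x) < 0"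
        using dir_neg[of f g x "x0 - x", OF g(3)] by blast
      have "scal_phi f g (x + s *\<^sub>R (x0 - x)) < ereal a" using s(2) unfolding a by (rule im_neg_rev)
      from phi_lt[of f g "x + s *\<^sub>R (x0 - x)", OF this]
      obtain w where w: "w \<in> f (x + s *\<^sub>R (x0 - x))" "ereal (- g w) < ereal a"
        by blast
      define l where "l = 1 / (1 + s)"
      have l: "0 < l" "l < 1" using s(1) by (auto simp: l_def)
      have ls: "l * s = 1 - l" using s(1) by (simp add: l_def field_simps)
      define d where "d = a + g w"
      have d: "d > 0" using w(2) by (simp add: d_def)
      define e where "e = l * d / 2"
      have e: "e > 0" using l d by (simp add: e_def)
      have "scal_phi f g x < ereal (a + e)" using a e by simp
      from phi_lt[of f g x, OF this]
      obtain w1' where w1': "w1' \<in> f x" "ereal (- g w1') < ereal (a + e)"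
        by blast
      define w' where "w' = l *\<^sub>R w + (1 - l) *\<^sub>R w1'"
      have "w' \<in> f (l *\<^sub>R (x + s *\<^sub>R (x0 - x)) + (1 - l) *\<^sub>R x)"
        unfolding w'_def using cm[OF l w(1) w1'(1)] .
      moreover have "l *\<^sub>R (x + s *\<^sub>R (x0 - x)) + (1 - l) *\<^sub>R x = x0 + l *\<^sub>R (x - x0)"
      proof -
        have "l *\<^sub>R (x + s *\<^sub>R (x0 - x)) + (1 - l) *\<^sub>R x = x + (l * s) *\<^sub>R (x0 - x)"
          by (simp add: algebra_simps)
        also have "\<dots> = x0 + l *\<^sub>R (x - x0)" unfolding ls by (simp add: algebra_simps)
        finally show ?thesis .
      qed
      ultimately have w'f: "w' \<in> f (x0 + l *\<^sub>R (x - x0))" by simp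
      have gw': "g w' = l * g w + (1 - l) * g w1'"
        unfolding w'_def using lin by (simp add: linear_add linear_scale)
      have h1: "- g w1' < a + e" using w1'(2) by simp
      have h2: "(1 - l) * (- g w1') \<le> (1 - l) * (a + e)"
        using h1 l by (intro mult_left_mono) auto
      have h3: "l * e \<ge> 0" using l e by simp
      have h4: "l * d > 0" using l d by simp
      have "- g w' = l * (a - d) + (1 - l) * (- g w1')" using gw' by (simp add: d_def algebra_simps)
      also have "\<dots> \<le> l * (a - d) + (1 - l) * (a + e)" using h2 by simp
      also have "\<dots> = a - l * d + e - l * e" by (simp add: algebra_simps)
      also have "\<dots> < a"
      proof -
        have "l * d = 2 * e" by (simp add: e_def)
        then show ?thesis using h3 e by linarith
      qed
      finally have lt: "- g w' < a" .
      have "w' \<notin> f x"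
      proof
        assume "w' \<in> f x"
        then have "scal_phi f g x \<le> ereal (- g w')" by (rule phi_le[of w' f x g])
        then show False using a lt by simp
      qed
      moreover have "w' \<in> I x" using Isub[OF l w'f] .
      ultimately show "I x \<noteq> f x" by blast
    qed
  next
    assume R: "\<forall>x \<in> sdom f. f x \<noteq> f x0 \<longrightarrow> f x \<subseteq> I x \<and> I x \<noteq> f x"
    show "\<forall>x. f x \<noteq> f x0 \<longrightarrow>
            (\<exists>g \<in> neg_dual_cone T C - {\<lambda>_. 0}.
               scal_phi f g x \<noteq> -\<infinity> \<and> scal_phi_dir f g x (x0 - x) < 0)"
    proof (intro allI impI)
      fix x assume ne: "f x \<noteq> f x0"
      show "\<exists>g \<in> neg_dual_cone T C - {\<lambda>_. 0}.
               scal_phi f g x \<noteq> -\<infinity> \<and> scal_phi_dir f g x (x0 - x) < 0"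
      proof (cases "f x = {}")
        case True
        obtain g0 where g0: "g0 \<in> neg_dual_cone T C - {\<lambda>_. 0}" using assms(6) by blast
        have p: "scal_phi f g0 x = \<infinity>" using phi_empty[of f x g0, OF True] .
        have "scal_phi_dir f g0 x (x0 - x) < 0"
          by (rule dir_neg_rev[of 1]) (simp_all add: p im_inf)
        then show ?thesis using g0 p by (intro bexI[of _ g0]) auto
      next
        case False
        then have xd: "x \<in> sdom f" by (simp add: sdom_def)
        with R ne have "f x \<subseteq> I x" "I x \<noteq> f x" by auto
        then obtain z where z: "z \<in> I x" "z \<notin> f x" by blast
        obtain k0 where k0: "k0 \<in> f x" using False by blast
        obtain g \<delta> where g: "g \<in> topdual T" "\<delta> > 0" and gk: "\<And>k. k \<in> f x \<Longrightarrow> g k \<le> g z - \<delta>"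
          using tvs_sep[OF tvs fx_closed fx_conv k0 z(2)] by blast
        have lin: "linear g" and cont: "continuous_map T euclideanreal g"
          using g(1) by (auto simp: topdual_def)
        have gC: "g c \<le> 0" if c: "c \<in> C" for c
        proof (rule ccontr)
          assume "\<not> g c \<le> 0"
          then have gc: "g c > 0" by simp
          have gzk: "g z - g k0 \<ge> \<delta>" using gk[OF k0] by simp
          define t where "t = (g z - g k0) / g c + 1"
          have t: "t > 0" using gc gzk g(2) by (simp add: t_def add_pos_nonneg)
          have "t *\<^sub>R c \<in> C" using assms(4) c t unfolding cone_def by simp
          then have "k0 + t *\<^sub>R c \<in> f x" using fx_upper[OF k0] by blast
          then have "g (k0 + t *\<^sub>R c) \<le> g z - \<delta>" by (rule gk)
          moreover have "g (k0 + t *\<^sub>R c) = g k0 + t * g c" using lin by (simp add: linear_add linear_scale)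
          moreover have "t * g c = g z - g k0 + g c" using gc by (simp add: t_def field_simps)
          ultimately show False using gc g(2) by simp
        qed
        have gnz: "g \<noteq> (\<lambda>_. 0)"
        proof
          assume "g = (\<lambda>_. 0)"
          then show False using gk[OF k0] g(2) by simp
        qed
        have gD: "g \<in> neg_dual_cone T C - {\<lambda>_. 0}"
          using g(1) gC gnz by (simp add: neg_dual_cone_def)
        have phi_ge: "ereal (- g z + \<delta>) \<le> scal_phi f g x"
          unfolding scal_phi_def
        proof (rule INF_greatest)
          fix k assume "k \<in> f x"
          then have "g k \<le> g z - \<delta>" by (rule gk)
          then show "ereal (- g z + \<delta>) \<le> ereal (- g k)" by simp
        qed
        then have phinf: "scal_phi f g x \<noteq> -\<infinity>" by auto
        obtain a where a: "scal_phi f g x = ereal a" using phi_fin[of k0 f x g, OF k0 phinf] by blast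
        obtain t w where tw: "0 < t" "t < 1" "w \<in> f (x0 + t *\<^sub>R (x - x0))" "g w > g z - \<delta>"
        proof (rule ccontr)
          assume "\<not> thesis"
          then have all: "\<And>t w. 0 < t \<Longrightarrow> t < 1 \<Longrightarrow> w \<in> f (x0 + t *\<^sub>R (x - x0)) \<Longrightarrow> g w \<le> g z - \<delta>"
            using that by (meson not_le)
          define H where "H = {y. g y \<le> g z - \<delta>}"
          have Hc: "convex H" unfolding convex_def H_def
          proof (intro ballI allI impI, simp)
            fix p q and u v :: real
            assume p: "g p \<le> g z - \<delta>" and q: "g q \<le> g z - \<delta>" and uv: "0 \<le> u" "0 \<le> v" "u + v = 1"
            have "g (u *\<^sub>R p + v *\<^sub>R q) = u * g p + v * g q" using lin by (simp add: linear_add linear_scale)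
            also have "\<dots> \<le> u * (g z - \<delta>) + v * (g z - \<delta>)"
              using p q uv by (intro add_mono mult_left_mono) auto
            also have "\<dots> = (u + v) * (g z - \<delta>)" by (simp add: distrib_right)
            also have "\<dots> = g z - \<delta>" using uv(3) by simp
            finally show "g (u *\<^sub>R p + v *\<^sub>R q) \<le> g z - \<delta>" .
          qed
          have "closedin T {y \<in> topspace T. g y \<in> {..g z - \<delta>}}"
            by (rule closedin_continuous_map_preimage[OF cont]) simp
          then have Hcl: "closedin T H" by (simp add: H_def top)
          have "(\<Union>t\<in>{0<..<1}. f (x0 + t *\<^sub>R (x - x0))) \<subseteq> H" using all by (auto simp: H_def)
          then have "convex hull (\<Union>t\<in>{0<..<1}. f (x0 + t *\<^sub>R (x - x0))) \<subseteq> H"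
            by (rule hull_minimal) (rule Hc)
          then have "I x \<subseteq> H" unfolding I_def by (rule closure_of_minimal) (rule Hcl)
          then show False using z(1) g(2) by (auto simp: H_def)
        qed
        have "scal_phi f g (x0 + t *\<^sub>R (x - x0)) \<le> ereal (- g w)" by (rule phi_le[of w f "x0 + t *\<^sub>R (x - x0)" g, OF tw(3)])
        also have "\<dots> < ereal (- g z + \<delta>)" using tw(4) by simp
        also have "\<dots> \<le> scal_phi f g x" by (rule phi_ge)
        finally have "scal_phi f g (x0 + t *\<^sub>R (x - x0)) < ereal a" using a by simp
        then have im: "inf_minus (scal_phi f g (x0 + t *\<^sub>R (x - x0))) (scal_phi f g x) < 0"
          unfolding a by (rule im_neg)
        have "x + (1 - t) *\<^sub>R (x0 - x) = x0 + t *\<^sub>R (x - x0)" by (simp add: algebra_simps)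
        then have "inf_minus (scal_phi f g (x + (1 - t) *\<^sub>R (x0 - x))) (scal_phi f g x) < 0"
          using im by simp
        then have "scal_phi_dir f g x (x0 - x) < 0" by (rule dir_neg_rev[rotated]) (use tw in simp)
        then show ?thesis using gD phinf by blast
      qed
    qed
  qed
  show ?thesis using main unfolding Let_def I_def .
qed


end
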